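(* Let $0\le\tau\le\varepsilon$, $\lambda:=\tau/\varepsilon$, $u_n\in\mathcal V_{[0,1]}$, and suppose $u_{n+1}\in\mathcal V$ and $\beta_{n+1}\in\mathcal B(u_{n+1})$ satisfy \[ u_{n+1} -e^{-\tau\Delta}u_n-\lambda u_{n+1}+\lambda\overline{u_{n+1}}\mathbf{1} =\lambda\beta_{n+1} -\lambda\overline{\beta_{n+1}}\mathbf{1}. \] Then $u_{n+1}$ is a minimiser of \[ \lambda\langle u,\mathbf{1} -u \rangle_{\mathcal V} + \|u-e^{-\tau\Delta}u_n\|^2_{\mathcal V} \] over $\{u\in\mathcal V_{[0,1]}:\mathcal M(u)=\mathcal M(u_n)\}$; on this set this objective equals $(1-\lambda)\|u\|^2_{\mathcal V}-2\langle u,e^{-\tau\Delta}u_n\rangle_{\mathcal V}$ plus a constant independent of $u$. In particular, when $\tau=\varepsilon$, $u_{n+1}$ maximises $\langle u,e^{-\tau\Delta}u_n\rangle_{\mathcal V}$ over $\{u\in\mathcal V_{[0,1]}:\mathcal M(u)=\mathcal M(u_n)\}$, i.e. $u_{n+1}$ is an update of the mass-conserving graph MBO scheme.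
   Context: $G=(V,E)$ is a finite, simple, connected, undirected graph with weights $\omega_{ij}=\omega_{ji}>0$ for $ij\in E$, $\omega_{ij}=0$ otherwise; $d_i=\sum_j\omega_{ij}$, $r\in[0,1]$ fixed. $\mathcal V$ = functions $V\to\mathbb R$ with $\langle u,v\rangle_{\mathcal V}=\sum_i u_iv_id_i^r$ and norm $\|\cdot\|_{\mathcal V}$; $\mathcal V_X$ = functions $V\to X$. $(\Delta u)_i=d_i^{-r}\sum_j\omega_{ij}(u_i-u_j)$; $e^{-\tau\Delta}$ is the matrix exponential. $\mathbf 1$ all-ones; $\mathcal M(u)=\langle u,\mathbf 1\rangle_{\mathcal V}$; $\bar v=\mathcal M(v)/\mathcal M(\mathbf 1)$. $\varepsilon>0$. For $u\in\mathcal V_{[0,1]}$, $\mathcal B(u)$ = set of $\beta\in\mathcal V$ with $\beta_i\ge0$ if $u_i=0$, $\beta_i=0$ if $0<u_i<1$, $\beta_i\le0$ if $u_i=1$; $\mathcal B(u)=\emptyset$ otherwise. The mass-conserving graph MBO scheme is defined by $u_{n+1}\in\operatorname{argmin}\{\langle\mathbf 1-2e^{-\tau\Delta}u_n,u\rangle_{\mathcal V}: u\in\mathcal V_{[0,1]},\ \mathcal M(u)=\mathcal M(u_n)\}$. *)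

theory Defs
  imports Complex_Main
begin

text \<open>Vertices form a finite type 'a. Weights are a function omega :: 'a => 'a => real,
  with omega i j > 0 exactly on edges, 0 otherwise.\<close>

definition weighted_graph :: "('a::finite \<Rightarrow> 'a \<Rightarrow> real) \<Rightarrow> bool" where
  "weighted_graph \<omega> \<longleftrightarrow>
     (\<forall>i j. \<omega> i j = \<omega> j i) \<and> (\<forall>i j. 0 \<le> \<omega> i j) \<and> (\<forall>i. \<omega> i i = 0) \<and>
     (\<forall>i j. (i, j) \<in> {(x, y). 0 < \<omega> x y}\<^sup>*)"

definition deg :: "('a::finite \<Rightarrow> 'a \<Rightarrow> real) \<Rightarrow> 'a \<Rightarrow> real" where
  "deg \<omega> i = (\<Sum>j\<in>UNIV. \<omega> i j)"

definition innerV :: "('a::finite \<Rightarrow> 'a \<Rightarrow> real) \<Rightarrow> real \<Rightarrow> ('a \<Rightarrow> real) \<Rightarrow> ('a \<Rightarrow> real) \<Rightarrow> real" where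
  "innerV \<omega> r u v = (\<Sum>i\<in>UNIV. u i * v i * (deg \<omega> i) powr r)"

definition normV_sq :: "('a::finite \<Rightarrow> 'a \<Rightarrow> real) \<Rightarrow> real \<Rightarrow> ('a \<Rightarrow> real) \<Rightarrow> real" where
  "normV_sq \<omega> r u = innerV \<omega> r u u"

definition graph_Laplacian :: "('a::finite \<Rightarrow> 'a \<Rightarrow> real) \<Rightarrow> real \<Rightarrow> ('a \<Rightarrow> real) \<Rightarrow> ('a \<Rightarrow> real)" where
  "graph_Laplacian \<omega> r u = (\<lambda>i. (deg \<omega> i) powr (- r) * (\<Sum>j\<in>UNIV. \<omega> i j * (u i - u j)))"

definition heat :: "('a::finite \<Rightarrow> 'a \<Rightarrow> real) \<Rightarrow> real \<Rightarrow> real \<Rightarrow> ('a \<Rightarrow> real) \<Rightarrow> ('a \<Rightarrow> real)" where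
  "heat \<omega> r \<tau> u = (\<lambda>i. \<Sum>k. ((- \<tau>) ^ k / fact k) * ((graph_Laplacian \<omega> r ^^ k) u) i)"

definition mass :: "('a::finite \<Rightarrow> 'a \<Rightarrow> real) \<Rightarrow> real \<Rightarrow> ('a \<Rightarrow> real) \<Rightarrow> real" where
  "mass \<omega> r u = innerV \<omega> r u (\<lambda>_. 1)"

definition avg :: "('a::finite \<Rightarrow> 'a \<Rightarrow> real) \<Rightarrow> real \<Rightarrow> ('a \<Rightarrow> real) \<Rightarrow> real" where
  "avg \<omega> r v = mass \<omega> r v / mass \<omega> r (\<lambda>_. 1)"

definition V01 :: "('a \<Rightarrow> real) \<Rightarrow> bool" where
  "V01 u \<longleftrightarrow> (\<forall>i. 0 \<le> u i \<and> u i \<le> 1)"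

definition Bset :: "('a \<Rightarrow> real) \<Rightarrow> ('a \<Rightarrow> real) set" where
  "Bset u = (if V01 u then
      {\<beta>. \<forall>i. (u i = 0 \<longrightarrow> 0 \<le> \<beta> i) \<and> (0 < u i \<and> u i < 1 \<longrightarrow> \<beta> i = 0) \<and> (u i = 1 \<longrightarrow> \<beta> i \<le> 0)}
    else {})"

definition mbo_update :: "('a::finite \<Rightarrow> 'a \<Rightarrow> real) \<Rightarrow> real \<Rightarrow> real \<Rightarrow> ('a \<Rightarrow> real) \<Rightarrow> ('a \<Rightarrow> real) \<Rightarrow> bool" where
  "mbo_update \<omega> r \<tau> u u' \<longleftrightarrow>
     V01 u' \<and> mass \<omega> r u' = mass \<omega> r u \<and>
     (\<forall>v. V01 v \<and> mass \<omega> r v = mass \<omega> r u \<longrightarrow>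
        innerV \<omega> r (\<lambda>i. 1 - 2 * heat \<omega> r \<tau> u i) u' \<le> innerV \<omega> r (\<lambda>i. 1 - 2 * heat \<omega> r \<tau> u i) v)"

end

theory Submission
  imports Defs
begin

lemma wg_facts:
  assumes G: "weighted_graph \<omega>"
  shows "\<omega> i j = \<omega> j i" "0 \<le> \<omega> i j"
  using G unfolding weighted_graph_def by auto

lemma mass_L:
  assumes G: "weighted_graph \<omega>"
  shows "mass \<omega> r (graph_Laplacian \<omega> r u) = 0"
proof -
  note nn = wg_facts(2)[OF G]
  have trm: "graph_Laplacian \<omega> r u i * 1 * deg \<omega> i powr r = (\<Sum>j\<in>UNIV. \<omega> i j * (u i - u j))" for i
  proof (cases "deg \<omega> i = 0")
    case True
    then have "\<forall>j\<in>UNIV. \<omega> i j = 0" using sum_nonneg_eq_0_iff[of UNIV "\<omega> i"] nn unfolding deg_def by auto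
    then show ?thesis using True by (simp add: graph_Laplacian_def)
  next
    case False
    then have pos: "deg \<omega> i > 0" using sum_nonneg[of UNIV "\<omega> i"] nn unfolding deg_def
      by (metis less_eq_real_def)
    then have one: "deg \<omega> i powr (-r) * deg \<omega> i powr r = 1" by (simp add: powr_add[symmetric])
    have "graph_Laplacian \<omega> r u i * 1 * deg \<omega> i powr r
        = (deg \<omega> i powr (-r) * deg \<omega> i powr r) * (\<Sum>j\<in>UNIV. \<omega> i j * (u i - u j))"
      by (simp add: graph_Laplacian_def mult_ac)
    then show ?thesis using one by simp
  qed
  have "mass \<omega> r (graph_Laplacian \<omega> r u) = (\<Sum>i\<in>UNIV. \<Sum>j\<in>UNIV. \<omega> i j * (u i - u j))"
    unfolding mass_def innerV_def using trm by simp
  also have "\<dots> = (\<Sum>i\<in>UNIV. \<Sum>j\<in>UNIV. \<omega> i j * u i) - (\<Sum>i\<in>UNIV. \<Sum>j\<in>UNIV. \<omega> i j * u j)"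
    by (simp add: right_diff_distrib sum_subtractf)
  also have "(\<Sum>i\<in>UNIV. \<Sum>j\<in>UNIV. \<omega> i j * u j) = (\<Sum>j\<in>UNIV. \<Sum>i\<in>UNIV. \<omega> i j * u j)"
    by (rule sum.swap)
  also have "\<dots> = (\<Sum>i\<in>UNIV. \<Sum>j\<in>UNIV. \<omega> i j * u i)"
    using wg_facts(1)[OF G] by simp
  finally show ?thesis by simp
qed

definition NN :: "('a::finite \<Rightarrow> real) \<Rightarrow> real" where "NN u = (\<Sum>i\<in>UNIV. \<bar>u i\<bar>)"

lemma comp_le_NN: "\<bar>u i\<bar> \<le> NN u"
  unfolding NN_def by (rule member_le_sum) auto

lemma NN_nonneg: "0 \<le> NN u"
  unfolding NN_def by (simp add: sum_nonneg)

lemma L_bound: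
  assumes G: "weighted_graph \<omega>"
  shows "\<exists>B\<ge>0. \<forall>u. NN (graph_Laplacian \<omega> r u) \<le> B * NN u"
proof -
  note nn = wg_facts(2)[OF G]
  define A where "A = (\<Sum>i\<in>UNIV. deg \<omega> i powr (-r) * deg \<omega> i * 2)"
  have dnn: "0 \<le> deg \<omega> i" for i unfolding deg_def using nn by (simp add: sum_nonneg)
  have Ai: "deg \<omega> i powr (-r) * deg \<omega> i * 2 \<le> A" for i
    unfolding A_def by (rule member_le_sum) (auto simp: dnn)
  have A0: "0 \<le> A" using Ai[of undefined] dnn[of undefined] by (smt (verit) mult_nonneg_nonneg powr_ge_zero)
  have comp: "\<bar>graph_Laplacian \<omega> r u i\<bar> \<le> A * NN u" for u i
  proof -
    have "\<bar>\<Sum>j\<in>UNIV. \<omega> i j * (u i - u j)\<bar> \<le> (\<Sum>j\<in>UNIV. \<bar>\<omega> i j * (u i - u j)\<bar>)"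
      by (rule sum_abs)
    also have "\<dots> \<le> (\<Sum>j\<in>UNIV. \<omega> i j * (2 * NN u))"
    proof (rule sum_mono)
      fix j
      have "\<bar>u i - u j\<bar> \<le> 2 * NN u" using comp_le_NN[of u i] comp_le_NN[of u j] by linarith
      then show "\<bar>\<omega> i j * (u i - u j)\<bar> \<le> \<omega> i j * (2 * NN u)"
        using nn[of i j] by (simp add: abs_mult mult_left_mono)
    qed
    also have "\<dots> = deg \<omega> i * (2 * NN u)" unfolding deg_def by (simp add: sum_distrib_right)
    finally have s: "\<bar>\<Sum>j\<in>UNIV. \<omega> i j * (u i - u j)\<bar> \<le> deg \<omega> i * (2 * NN u)" .
    have "\<bar>graph_Laplacian \<omega> r u i\<bar> = deg \<omega> i powr (-r) * \<bar>\<Sum>j\<in>UNIV. \<omega> i j * (u i - u j)\<bar>"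
      by (simp add: graph_Laplacian_def abs_mult)
    also have "\<dots> \<le> deg \<omega> i powr (-r) * (deg \<omega> i * (2 * NN u))"
      using s by (simp add: mult_left_mono)
    also have "\<dots> = (deg \<omega> i powr (-r) * deg \<omega> i * 2) * NN u" by simp
    also have "\<dots> \<le> A * NN u" using Ai[of i] NN_nonneg[of u] by (simp add: mult_right_mono)
    finally show ?thesis .
  qed
  show ?thesis
  proof (intro exI[of _ "real (card (UNIV::'a set)) * A"] conjI allI)
    show "0 \<le> real (card (UNIV::'a set)) * A" using A0 by simp
    fix u
    have "NN (graph_Laplacian \<omega> r u) \<le> (\<Sum>i\<in>(UNIV::'a set). A * NN u)"
      unfolding NN_def[of "graph_Laplacian \<omega> r u"] by (rule sum_mono) (rule comp)
    then show "NN (graph_Laplacian \<omega> r u) \<le> real (card (UNIV::'a set)) * A * NN u" by simp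
  qed
qed

lemma heat_summable:
  assumes G: "weighted_graph \<omega>"
  shows "summable (\<lambda>k. ((- \<tau>) ^ k / fact k) * ((graph_Laplacian \<omega> r ^^ k) u) i)"
proof -
  obtain B where B0: "B \<ge> 0" and B: "\<And>u. NN (graph_Laplacian \<omega> r u) \<le> B * NN u"
    using L_bound[OF G, of r] by blast
  have Lk: "NN ((graph_Laplacian \<omega> r ^^ k) u) \<le> B ^ k * NN u" for k
  proof (induction k)
    case 0 then show ?case by simp
  next
    case (Suc k)
    have "NN ((graph_Laplacian \<omega> r ^^ Suc k) u) \<le> B * NN ((graph_Laplacian \<omega> r ^^ k) u)"
      using B by simp
    also have "\<dots> \<le> B * (B ^ k * NN u)" using Suc B0 by (simp add: mult_left_mono)
    finally show ?case by simp
  qed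
  have sg: "summable (\<lambda>k. inverse (fact k) * (\<bar>\<tau>\<bar> * B) ^ k * NN u)"
    by (rule summable_mult2) (rule summable_exp)
  show ?thesis
  proof (rule summable_comparison_test'[OF sg])
    fix k :: nat
    have "norm (((- \<tau>) ^ k / fact k) * ((graph_Laplacian \<omega> r ^^ k) u) i)
        = inverse (fact k) * \<bar>\<tau>\<bar> ^ k * \<bar>((graph_Laplacian \<omega> r ^^ k) u) i\<bar>"
      by (simp add: abs_mult power_abs divide_inverse mult_ac)
    also have "\<dots> \<le> inverse (fact k) * \<bar>\<tau>\<bar> ^ k * (B ^ k * NN u)"
      using order_trans[OF comp_le_NN Lk] by (simp add: mult_left_mono)
    also have "\<dots> = inverse (fact k) * (\<bar>\<tau>\<bar> * B) ^ k * NN u" by (simp add: power_mult_distrib mult_ac)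
    finally show "norm (((- \<tau>) ^ k / fact k) * ((graph_Laplacian \<omega> r ^^ k) u) i)
        \<le> inverse (fact k) * (\<bar>\<tau>\<bar> * B) ^ k * NN u" .
  qed
qed

lemma mass_heat:
  assumes G: "weighted_graph \<omega>"
  shows "mass \<omega> r (heat \<omega> r \<tau> u) = mass \<omega> r u"
proof -
  have "mass \<omega> r (heat \<omega> r \<tau> u) = (\<Sum>i\<in>UNIV. \<Sum>k. ((- \<tau>) ^ k / fact k) * ((graph_Laplacian \<omega> r ^^ k) u) i * deg \<omega> i powr r)"
    unfolding mass_def innerV_def heat_def
  proof (rule sum.cong[OF refl])
    fix i
    show "(\<Sum>k. (- \<tau>) ^ k / fact k * (graph_Laplacian \<omega> r ^^ k) u i) * 1 * deg \<omega> i powr r =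
        (\<Sum>k. (- \<tau>) ^ k / fact k * (graph_Laplacian \<omega> r ^^ k) u i * deg \<omega> i powr r)"
      using suminf_mult2[OF heat_summable[OF G], of \<tau> r u i "deg \<omega> i powr r"] by simp
  qed
  also have "\<dots> = (\<Sum>k. \<Sum>i\<in>UNIV. ((- \<tau>) ^ k / fact k) * ((graph_Laplacian \<omega> r ^^ k) u) i * deg \<omega> i powr r)"
    by (rule suminf_sum[symmetric]) (intro summable_mult2 heat_summable[OF G])
  also have "\<dots> = (\<Sum>k. if k = 0 then mass \<omega> r u else 0)"
  proof (rule arg_cong[where f=suminf], rule ext)
    fix k :: nat
    have e: "(\<Sum>i\<in>UNIV. ((- \<tau>) ^ k / fact k) * ((graph_Laplacian \<omega> r ^^ k) u) i * deg \<omega> i powr r)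
       = ((- \<tau>) ^ k / fact k) * mass \<omega> r ((graph_Laplacian \<omega> r ^^ k) u)"
      unfolding mass_def innerV_def by (simp add: sum_distrib_left mult_ac)
    show "(\<Sum>i\<in>UNIV. ((- \<tau>) ^ k / fact k) * ((graph_Laplacian \<omega> r ^^ k) u) i * deg \<omega> i powr r)
       = (if k = 0 then mass \<omega> r u else 0)"
    proof (cases k)
      case 0 then show ?thesis using e by simp
    next
      case (Suc m) then show ?thesis using e mass_L[OF G] by simp
    qed
  qed
  also have "\<dots> = mass \<omega> r u"
    using sums_unique[OF sums_single[of 0 "\<lambda>_. mass \<omega> r u"]] by simp
  finally show ?thesis .
qed

lemma mass_eq: "mass \<omega> r v = (\<Sum>i\<in>UNIV. v i * deg \<omega> i powr r)"
  unfolding mass_def innerV_def by simp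

theorem theorem13:
  fixes \<omega> :: "'a::finite \<Rightarrow> 'a \<Rightarrow> real"
    and r \<epsilon> \<tau> :: real and un un1 \<beta> :: "'a \<Rightarrow> real"
  assumes G: "weighted_graph \<omega>"
    and r: "0 \<le> r" "r \<le> 1"
    and eps: "0 < \<epsilon>"
    and tau: "0 \<le> \<tau>" "\<tau> \<le> \<epsilon>"
    and un: "V01 un"
    and beta: "\<beta> \<in> Bset un1"
    and eq: "\<And>i. un1 i - heat \<omega> r \<tau> un i - (\<tau> / \<epsilon>) * un1 i + (\<tau> / \<epsilon>) * avg \<omega> r un1
                 = (\<tau> / \<epsilon>) * \<beta> i - (\<tau> / \<epsilon>) * avg \<omega> r \<beta>"
  shows "let lam = \<tau> / \<epsilon>; w = heat \<omega> r \<tau> un;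
             F = (\<lambda>u. lam * innerV \<omega> r u (\<lambda>i. 1 - u i) + normV_sq \<omega> r (\<lambda>i. u i - w i));
             C = {u. V01 u \<and> mass \<omega> r u = mass \<omega> r un}
         in un1 \<in> C \<and> (\<forall>u\<in>C. F un1 \<le> F u)
            \<and> (\<exists>c. \<forall>u\<in>C. F u = (1 - lam) * normV_sq \<omega> r u - 2 * innerV \<omega> r u w + c)
            \<and> (\<tau> = \<epsilon> \<longrightarrow> (\<forall>u\<in>C. innerV \<omega> r u w \<le> innerV \<omega> r un1 w) \<and> mbo_update \<omega> r \<tau> un un1)"
proof -
  define lam where "lam = \<tau> / \<epsilon>"
  define w where "w = heat \<omega> r \<tau> un"
  define F where "F = (\<lambda>u. lam * innerV \<omega> r u (\<lambda>i. 1 - u i) + normV_sq \<omega> r (\<lambda>i. u i - w i))"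
  define C where "C = {u. V01 u \<and> mass \<omega> r u = mass \<omega> r un}"
  define p where "p i = deg \<omega> i powr r" for i
  define a where "a = avg \<omega> r un1"
  define b where "b = avg \<omega> r \<beta>"
  define M1 where "M1 = mass \<omega> r (\<lambda>_. 1)"
  have p0: "0 \<le> p i" for i unfolding p_def by simp
  have lam0: "0 \<le> lam" and lam1: "lam \<le> 1" unfolding lam_def using eps tau by auto
  have eq': "un1 i - w i - lam * un1 i + lam * a = lam * \<beta> i - lam * b" for i
    using eq[of i] unfolding lam_def w_def a_def b_def by simp
  have V1: "V01 un1" using beta unfolding Bset_def by (auto split: if_splits)
  have Bi: "\<forall>i. (un1 i = 0 \<longrightarrow> 0 \<le> \<beta> i) \<and> (0 < un1 i \<and> un1 i < 1 \<longrightarrow> \<beta> i = 0) \<and> (un1 i = 1 \<longrightarrow> \<beta> i \<le> 0)"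
    using beta V1 unfolding Bset_def by simp
  have mw: "mass \<omega> r w = mass \<omega> r un" unfolding w_def by (rule mass_heat[OF G])
  have M1e: "M1 = (\<Sum>i\<in>UNIV. p i)" unfolding M1_def mass_eq p_def by simp
  have m_un1: "mass \<omega> r un1 = mass \<omega> r un"
  proof (cases "M1 = 0")
    case True
    then have "\<forall>i\<in>UNIV. p i = 0" using sum_nonneg_eq_0_iff[of UNIV p] p0 M1e by auto
    then have "mass \<omega> r v = 0" for v unfolding mass_eq p_def[symmetric] by simp
    then show ?thesis by simp
  next
    case False
    have aM: "a * M1 = mass \<omega> r un1" unfolding a_def avg_def M1_def using False M1_def by simp
    have bM: "b * M1 = mass \<omega> r \<beta>" unfolding b_def avg_def M1_def using False M1_def by simp
    have "(\<Sum>i\<in>UNIV. (un1 i - w i - lam * un1 i + lam * a) * p i) = (\<Sum>i\<in>UNIV. (lam * \<beta> i - lam * b) * p i)"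
      using eq' by simp
    moreover have "(\<Sum>i\<in>UNIV. (un1 i - w i - lam * un1 i + lam * a) * p i)
       = mass \<omega> r un1 - mass \<omega> r w - lam * mass \<omega> r un1 + lam * (a * M1)"
      unfolding mass_eq M1e p_def[symmetric]
      by (simp add: algebra_simps sum.distrib sum_subtractf sum_distrib_left)
    moreover have "(\<Sum>i\<in>UNIV. (lam * \<beta> i - lam * b) * p i) = lam * mass \<omega> r \<beta> - lam * (b * M1)"
      unfolding mass_eq M1e p_def[symmetric]
      by (simp add: algebra_simps sum.distrib sum_subtractf sum_distrib_left)
    ultimately show ?thesis using aM bM mw by simp
  qed
  have inC: "un1 \<in> C" unfolding C_def using V1 m_un1 by simp
  have Fe: "F u = (\<Sum>i\<in>UNIV. p i * (lam * u i * (1 - u i) + (u i - w i)\<^sup>2))" for u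
    unfolding F_def innerV_def normV_sq_def p_def[symmetric] sum_distrib_left sum.distrib[symmetric]
    by (rule sum.cong) (simp_all add: power2_eq_square algebra_simps)
  define K where "K = lam - 2 * lam * b - 2 * lam * a"
  have minim: "F un1 \<le> F u" if uC: "u \<in> C" for u
  proof -
    have mu: "mass \<omega> r u = mass \<omega> r un1" using uC m_un1 unfolding C_def by simp
    have uV: "V01 u" using uC unfolding C_def by simp
    have wi: "w i = (1 - lam) * un1 i - lam * \<beta> i + lam * b + lam * a" for i
      using eq'[of i] by (simp add: algebra_simps)
    have trm2: "p i * (lam * u i * (1 - u i) + (u i - w i)\<^sup>2) - p i * (lam * un1 i * (1 - un1 i) + (un1 i - w i)\<^sup>2)
      = p i * ((1 - lam) * (u i - un1 i)\<^sup>2 + 2 * lam * ((u i - un1 i) * \<beta> i)) + K * ((u i - un1 i) * p i)" for i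
      unfolding wi K_def by (simp add: power2_eq_square algebra_simps)
    have nn: "0 \<le> p i * ((1 - lam) * (u i - un1 i)\<^sup>2 + 2 * lam * ((u i - un1 i) * \<beta> i))" for i
    proof -
      have "0 \<le> (u i - un1 i) * \<beta> i"
        using Bi uV V1 unfolding V01_def
        by (smt (verit, best) mult_nonneg_nonneg mult_nonpos_nonpos)
      then show ?thesis using p0[of i] lam0 lam1 by simp
    qed
    have "F u - F un1 = (\<Sum>i\<in>UNIV. p i * ((1 - lam) * (u i - un1 i)\<^sup>2 + 2 * lam * ((u i - un1 i) * \<beta> i)))
        + K * (\<Sum>i\<in>UNIV. (u i - un1 i) * p i)"
      unfolding Fe sum_subtractf[symmetric] trm2 by (simp add: sum.distrib sum_distrib_left)
    moreover have "(\<Sum>i\<in>UNIV. (u i - un1 i) * p i) = 0"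
      using mu unfolding mass_eq p_def[symmetric] by (simp add: left_diff_distrib sum_subtractf)
    moreover have "0 \<le> (\<Sum>i\<in>UNIV. p i * ((1 - lam) * (u i - un1 i)\<^sup>2 + 2 * lam * ((u i - un1 i) * \<beta> i)))"
      using nn by (simp add: sum_nonneg)
    ultimately show ?thesis by simp
  qed
  have Fform: "F u = (1 - lam) * normV_sq \<omega> r u - 2 * innerV \<omega> r u w + (lam * mass \<omega> r un + normV_sq \<omega> r w)"
    if uC: "u \<in> C" for u
  proof -
    have mu: "mass \<omega> r u = mass \<omega> r un" using uC unfolding C_def by simp
    have "F u = (1 - lam) * normV_sq \<omega> r u - 2 * innerV \<omega> r u w + (lam * mass \<omega> r u + normV_sq \<omega> r w)"
      unfolding Fe normV_sq_def innerV_def mass_eq p_def[symmetric]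
      by (simp add: sum_distrib_left sum.distrib sum_subtractf power2_eq_square algebra_simps)
    then show ?thesis using mu by simp
  qed
  have lin: "innerV \<omega> r (\<lambda>i. 1 - 2 * w i) v = mass \<omega> r v - 2 * innerV \<omega> r v w" for v
    unfolding innerV_def mass_eq
    by (simp add: sum_distrib_left sum.distrib sum_subtractf algebra_simps)
  have last: "(\<forall>u\<in>C. innerV \<omega> r u w \<le> innerV \<omega> r un1 w) \<and> mbo_update \<omega> r \<tau> un un1" if te: "\<tau> = \<epsilon>"
  proof -
    have l1: "lam = 1" unfolding lam_def using te eps by simp
    have ip: "innerV \<omega> r u w \<le> innerV \<omega> r un1 w" if uC: "u \<in> C" for u
      using minim[OF uC] Fform[OF uC] Fform[OF inC] l1 by simp
    moreover have "mbo_update \<omega> r \<tau> un un1"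
      unfolding mbo_update_def w_def[symmetric] lin
    proof (intro conjI allI impI)
      show "V01 un1" by (rule V1)
      show "mass \<omega> r un1 = mass \<omega> r un" by (rule m_un1)
      fix v assume "V01 v \<and> mass \<omega> r v = mass \<omega> r un"
      then have vC: "v \<in> C" unfolding C_def by simp
      show "mass \<omega> r un1 - 2 * innerV \<omega> r un1 w \<le> mass \<omega> r v - 2 * innerV \<omega> r v w"
        using ip[OF vC] vC m_un1 unfolding C_def by simp
    qed
    ultimately show ?thesis by blast
  qed
  have A: "\<forall>u\<in>C. F un1 \<le> F u" using minim by blast
  have B: "\<exists>c. \<forall>u\<in>C. F u = (1 - lam) * normV_sq \<omega> r u - 2 * innerV \<omega> r u w + c"
    using Fform by blast
  have D: "\<tau> = \<epsilon> \<longrightarrow> (\<forall>u\<in>C. innerV \<omega> r u w \<le> innerV \<omega> r un1 w) \<and> mbo_update \<omega> r \<tau> un un1"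
    using last by blast
  show ?thesis
    unfolding Let_def lam_def[symmetric] w_def[symmetric] C_def[symmetric]
    using inC A[unfolded F_def] B[unfolded F_def] D by (intro conjI)
qed
end
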